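(* Let $G$ be a finite group and let $\chi, \chi' \in \mathrm{Irr}(G)$. Then $\sum_{C \in \mathrm{Conj}(G)} |C|^2 \chi(C)\overline{\chi'(C)}$ is an integer divisible by $|Z(G)|$.
   Context: $\mathrm{Irr}(G)$ is the set of irreducible complex characters of $G$, $\mathrm{Conj}(G)$ the set of conjugacy classes, $|C|$ the size of class $C$, $\chi(C)$ the value of $\chi$ on $C$, and $Z(G)$ the centre of $G$. *)

theory Defs
  imports "Jordan_Normal_Form.Matrix" "HOL-Algebra.Group"
begin

definition mtrace :: "complex mat \<Rightarrow> complex" where
  "mtrace A = (\<Sum>i<dim_row A. A $$ (i, i))"

definition is_rep :: "('g, 'b) monoid_scheme \<Rightarrow> nat \<Rightarrow> ('g \<Rightarrow> complex mat) \<Rightarrow> bool" where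
  "is_rep G n \<rho> \<longleftrightarrow>
     (\<forall>g\<in>carrier G. \<rho> g \<in> carrier_mat n n) \<and>
     (\<forall>g\<in>carrier G. \<forall>h\<in>carrier G. \<rho> (g \<otimes>\<^bsub>G\<^esub> h) = \<rho> g * \<rho> h) \<and>
     \<rho> \<one>\<^bsub>G\<^esub> = 1\<^sub>m n"

definition is_subspace_vec :: "nat \<Rightarrow> complex vec set \<Rightarrow> bool" where
  "is_subspace_vec n W \<longleftrightarrow> W \<subseteq> carrier_vec n \<and> 0\<^sub>v n \<in> W \<and>
     (\<forall>v\<in>W. \<forall>w\<in>W. v + w \<in> W) \<and> (\<forall>c v. v \<in> W \<longrightarrow> c \<cdot>\<^sub>v v \<in> W)"

definition irreducible_rep :: "('g, 'b) monoid_scheme \<Rightarrow> nat \<Rightarrow> ('g \<Rightarrow> complex mat) \<Rightarrow> bool" where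
  "irreducible_rep G n \<rho> \<longleftrightarrow> is_rep G n \<rho> \<and> n > 0 \<and>
     (\<forall>W. is_subspace_vec n W \<and> (\<forall>g\<in>carrier G. \<forall>w\<in>W. \<rho> g *\<^sub>v w \<in> W)
          \<longrightarrow> W = {0\<^sub>v n} \<or> W = carrier_vec n)"

definition Irr :: "('g, 'b) monoid_scheme \<Rightarrow> ('g \<Rightarrow> complex) set" where
  "Irr G = {\<chi>. \<exists>n \<rho>. irreducible_rep G n \<rho> \<and>
                 \<chi> = (\<lambda>g. if g \<in> carrier G then mtrace (\<rho> g) else 0)}"

definition conj_class :: "('g, 'b) monoid_scheme \<Rightarrow> 'g \<Rightarrow> 'g set" where
  "conj_class G g = {h \<otimes>\<^bsub>G\<^esub> g \<otimes>\<^bsub>G\<^esub> inv\<^bsub>G\<^esub> h | h. h \<in> carrier G}"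

definition Conj :: "('g, 'b) monoid_scheme \<Rightarrow> 'g set set" where
  "Conj G = conj_class G ` carrier G"

definition class_val :: "('g \<Rightarrow> complex) \<Rightarrow> 'g set \<Rightarrow> complex" where
  "class_val \<chi> C = \<chi> (SOME g. g \<in> C)"

definition centre :: "('g, 'b) monoid_scheme \<Rightarrow> 'g set" where
  "centre G = {z \<in> carrier G. \<forall>g\<in>carrier G. z \<otimes>\<^bsub>G\<^esub> g = g \<otimes>\<^bsub>G\<^esub> z}"

end

theory Submission
  imports Defs "Jordan_Normal_Form.Schur_Decomposition" "Jordan_Normal_Form.Spectral_Radius" "HOL-Algebra.Coset" "HOL-Algebra.Multiplicative_Group"
begin

lemma mtrace_mult_comm:
  assumes A: "A \<in> carrier_mat n m" and B: "B \<in> carrier_mat m n"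
  shows "mtrace (A * B) = mtrace (B * A)"
proof -
  have "mtrace (A * B) = (\<Sum>i<n. \<Sum>k<m. A $$ (i,k) * B $$ (k,i))"
    using A B by (auto simp: mtrace_def scalar_prod_def row_def col_def atLeast0LessThan intro!: sum.cong)
  also have "\<dots> = (\<Sum>k<m. \<Sum>i<n. B $$ (k,i) * A $$ (i,k))"
    by (subst sum.swap) (simp add: mult.commute)
  also have "\<dots> = mtrace (B * A)"
    using A B by (auto simp: mtrace_def scalar_prod_def row_def col_def atLeast0LessThan intro!: sum.cong)
  finally show ?thesis .
qed

lemma mtrace_smult_one: "mtrace (c \<cdot>\<^sub>m 1\<^sub>m n) = c * of_nat n"
  by (simp add: mtrace_def)

lemma schur_lemma:
  assumes irr: "irreducible_rep G n \<rho>" and K: "K \<in> carrier_mat n n"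
    and comm: "\<And>g. g \<in> carrier G \<Longrightarrow> K * \<rho> g = \<rho> g * K"
  shows "\<exists>c. K = c \<cdot>\<^sub>m 1\<^sub>m n"
proof -
  from irr have n: "n > 0" and rep: "is_rep G n \<rho>" unfolding irreducible_rep_def by auto
  have rhoC: "\<rho> g \<in> carrier_mat n n" if "g \<in> carrier G" for g
    using rep that unfolding is_rep_def by auto
  from spectrum_non_empty[OF K n] obtain c where "eigenvalue K c"
    unfolding spectrum_def by auto
  then obtain v where ev: "eigenvector K v c" unfolding eigenvalue_def by auto
  hence v: "v \<in> carrier_vec n" "v \<noteq> 0\<^sub>v n" "K *\<^sub>v v = c \<cdot>\<^sub>v v"
    using K unfolding eigenvector_def by auto
  define W where "W = {w \<in> carrier_vec n. K *\<^sub>v w = c \<cdot>\<^sub>v w}"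
  have sub: "is_subspace_vec n W"
    unfolding is_subspace_vec_def W_def
  proof (intro conjI ballI allI impI)
    show "0\<^sub>v n \<in> {w \<in> carrier_vec n. K *\<^sub>v w = c \<cdot>\<^sub>v w}" using K by auto
  next
    fix a b assume a: "a \<in> {w \<in> carrier_vec n. K *\<^sub>v w = c \<cdot>\<^sub>v w}" and b: "b \<in> {w \<in> carrier_vec n. K *\<^sub>v w = c \<cdot>\<^sub>v w}"
    show "a + b \<in> {w \<in> carrier_vec n. K *\<^sub>v w = c \<cdot>\<^sub>v w}"
      using a b K by (auto simp: mult_add_distrib_mat_vec smult_add_distrib_vec)
  next
    fix d a assume a: "a \<in> {w \<in> carrier_vec n. K *\<^sub>v w = c \<cdot>\<^sub>v w}"
    show "d \<cdot>\<^sub>v a \<in> {w \<in> carrier_vec n. K *\<^sub>v w = c \<cdot>\<^sub>v w}"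
      using a K by (auto simp: mult_mat_vec smult_smult_assoc mult.commute)
  qed auto
  have inv: "\<forall>g\<in>carrier G. \<forall>w\<in>W. \<rho> g *\<^sub>v w \<in> W"
  proof (intro ballI)
    fix g w assume g: "g \<in> carrier G" and w: "w \<in> W"
    have "K *\<^sub>v (\<rho> g *\<^sub>v w) = (K * \<rho> g) *\<^sub>v w"
      using K rhoC[OF g] w unfolding W_def by (auto simp: assoc_mult_mat_vec)
    also have "\<dots> = (\<rho> g * K) *\<^sub>v w" using comm[OF g] by simp
    also have "\<dots> = \<rho> g *\<^sub>v (K *\<^sub>v w)"
      using K rhoC[OF g] w unfolding W_def by (auto simp: assoc_mult_mat_vec)
    also have "\<dots> = c \<cdot>\<^sub>v (\<rho> g *\<^sub>v w)" using w rhoC[OF g] unfolding W_def by (auto simp: mult_mat_vec)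
    finally show "\<rho> g *\<^sub>v w \<in> W" using w rhoC[OF g] unfolding W_def by auto
  qed
  from irr sub inv have "W = {0\<^sub>v n} \<or> W = carrier_vec n" unfolding irreducible_rep_def by blast
  moreover have "v \<in> W" using v unfolding W_def by auto
  ultimately have WC: "W = carrier_vec n" using v by auto
  have "K = c \<cdot>\<^sub>m 1\<^sub>m n"
  proof (rule eq_matI)
    fix i j assume i: "i < dim_row (c \<cdot>\<^sub>m 1\<^sub>m n)" and j: "j < dim_col (c \<cdot>\<^sub>m 1\<^sub>m n)"
    have u: "unit_vec n j \<in> W" using WC j by auto
    hence "K *\<^sub>v unit_vec n j = c \<cdot>\<^sub>v unit_vec n j" unfolding W_def by auto
    hence "(K *\<^sub>v unit_vec n j) $ i = (c \<cdot>\<^sub>v unit_vec n j) $ i" by simp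
    thus "K $$ (i, j) = (c \<cdot>\<^sub>m 1\<^sub>m n) $$ (i, j)" using i j K by auto
  qed (use K in auto)
  thus ?thesis by blast
qed

lemma upper_tri_pow:
  fixes B :: "'a :: comm_ring_1 mat"
  assumes B: "B \<in> carrier_mat n n" and ut: "upper_triangular B"
  shows "upper_triangular (B ^\<^sub>m k) \<and> (\<forall>i<n. (B ^\<^sub>m k) $$ (i,i) = (B $$ (i,i)) ^ k)"
proof (induction k)
  case 0
  then show ?case using B by auto
next
  case (Suc k)
  let ?X = "B ^\<^sub>m k"
  have X: "?X \<in> carrier_mat n n" using B by auto
  from Suc have utX: "upper_triangular ?X" and dX: "\<forall>i<n. ?X $$ (i,i) = (B $$ (i,i)) ^ k" by auto
  have Xz: "?X $$ (i,l) = 0" if "l < i" "i < n" for i l using utX that X by auto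
  have Bz: "B $$ (l,j) = 0" if "j < l" "l < n" for j l using ut that B by auto
  have prod: "(?X * B) $$ (i,j) = (\<Sum>l<n. ?X $$ (i,l) * B $$ (l,j))" if "i < n" "j < n" for i j
    using X B that by (auto simp: scalar_prod_def atLeast0LessThan intro!: sum.cong)
  have "upper_triangular (?X * B)"
  proof (rule upper_triangularI)
    fix i j assume ji: "j < i" and i: "i < dim_row (?X * B)"
    hence i': "i < n" using X by auto
    have "(?X * B) $$ (i,j) = (\<Sum>l<n. ?X $$ (i,l) * B $$ (l,j))" using prod i' ji by auto
    also have "\<dots> = 0"
    proof (rule sum.neutral, intro ballI)
      fix l assume "l \<in> {..<n}"
      thus "?X $$ (i,l) * B $$ (l,j) = 0"
        using Xz[of l i] Bz[of j l] i' ji by (cases "l < i") auto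
    qed
    finally show "(?X * B) $$ (i,j) = 0" .
  qed
  moreover have "(?X * B) $$ (i,i) = (B $$ (i,i)) ^ Suc k" if i: "i < n" for i
  proof -
    have "(?X * B) $$ (i,i) = (\<Sum>l<n. ?X $$ (i,l) * B $$ (l,i))" using prod i by auto
    also have "\<dots> = ?X $$ (i,i) * B $$ (i,i)"
    proof (rule sum.mono_neutral_right[where S = "{i}", simplified])
      show "finite {..<n}" by simp
      show "i \<in> {..<n}" using i by simp
      show "\<forall>l\<in>{..<n} - {i}. ?X $$ (i, l) * B $$ (l, i) = 0"
      proof
        fix l assume l: "l \<in> {..<n} - {i}"
        show "?X $$ (i, l) * B $$ (l, i) = 0"
        proof (cases "l < i")
          case True thus ?thesis using Xz[of l i] i by simp
        next
          case False hence "i < l" using l by auto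
          thus ?thesis using Bz[of i l] l by simp
        qed
      qed
    qed
    finally show ?thesis using dX i by (simp add: mult.commute)
  qed
  ultimately show ?case by simp
qed

lemma trace_pow_eigen:
  assumes A: "A \<in> carrier_mat n n" and AN: "A ^\<^sub>m N = 1\<^sub>m n"
  shows "\<exists>es. length es = n \<and> (\<forall>e\<in>set es. e ^ N = 1) \<and> (\<forall>k. mtrace (A ^\<^sub>m k) = (\<Sum>e\<leftarrow>es. e ^ k))"
proof -
  obtain es where cp: "char_poly A = (\<Prod>a\<leftarrow>es. [:- a, 1:])" and len: "length es = n"
    using char_poly_factorized[OF A] by auto
  obtain B P Q where sd: "schur_decomposition A es = (B,P,Q)" by (cases "schur_decomposition A es") auto
  from schur_decomposition[OF A cp sd] have sim: "similar_mat_wit A B P Q"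
    and ut: "upper_triangular B" and dg: "diag_mat B = es" by auto
  from similar_mat_witD2[OF A sim] have PQ: "Q * P = 1\<^sub>m n" and Bc: "B \<in> carrier_mat n n"
    and Pc: "P \<in> carrier_mat n n" and Qc: "Q \<in> carrier_mat n n" by auto
  have tr: "mtrace (A ^\<^sub>m k) = (\<Sum>e\<leftarrow>es. e ^ k)" for k
  proof -
    have "A ^\<^sub>m k = P * B ^\<^sub>m k * Q" by (rule similar_mat_wit_pow_id[OF sim])
    hence "mtrace (A ^\<^sub>m k) = mtrace ((P * B ^\<^sub>m k) * Q)" by simp
    also have "\<dots> = mtrace (Q * (P * B ^\<^sub>m k))"
      by (rule mtrace_mult_comm[of _ n n]) (use Pc Bc Qc in auto)
    also have "Q * (P * B ^\<^sub>m k) = (Q * P) * B ^\<^sub>m k"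
      using Pc Bc Qc by (intro assoc_mult_mat[symmetric, of _ n n _ n _ n]) auto
    also have "\<dots> = B ^\<^sub>m k" using PQ Bc by simp
    also have "mtrace (B ^\<^sub>m k) = (\<Sum>i<n. (B $$ (i,i)) ^ k)"
      using upper_tri_pow[OF Bc ut, of k] Bc unfolding mtrace_def by auto
    also have "\<dots> = (\<Sum>e\<leftarrow>es. e ^ k)"
      using dg Bc unfolding diag_mat_def
      by (auto simp: sum_list_sum_nth atLeast0LessThan)
    finally show ?thesis .
  qed
  have rt: "e ^ N = 1" if e: "e \<in> set es" for e
  proof -
    have "poly (char_poly A) e = 0" unfolding cp using e
      by (induction es) (auto simp: poly_prod_list)
    hence "eigenvalue A e" using eigenvalue_root_char_poly[OF A] by simp
    then obtain v where ev: "eigenvector A v e" unfolding eigenvalue_def by auto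
    hence v: "v \<in> carrier_vec n" "v \<noteq> 0\<^sub>v n" using A unfolding eigenvector_def by auto
    have "A ^\<^sub>m N *\<^sub>v v = e ^ N \<cdot>\<^sub>v v" by (rule eigenvector_pow[OF A ev])
    hence eq: "v = e ^ N \<cdot>\<^sub>v v" using AN v by simp
    from v obtain i where i: "i < n" "v $ i \<noteq> 0"
      by (metis carrier_vecD eq_vecI index_zero_vec(1) index_zero_vec(2))
    have "v $ i = e ^ N * v $ i" using arg_cong[OF eq, of "\<lambda>w. w $ i"] i v by simp
    thus ?thesis using i by simp
  qed
  show ?thesis using len rt tr by blast
qed

lemma alg_int_from_action:
  fixes t :: "'i \<Rightarrow> complex" and q :: complex and c :: "'j \<Rightarrow> int"
  assumes fin: "finite I" and ii: "ii \<in> I" "t ii \<noteq> 0" and finJ: "finite J"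
    and act: "\<And>i. i \<in> I \<Longrightarrow> q * t i = (\<Sum>j\<in>J. of_int (c j) * t (\<sigma> i j))"
    and sig: "\<And>i j. i \<in> I \<Longrightarrow> j \<in> J \<Longrightarrow> \<sigma> i j \<in> I"
  shows "algebraic_int q"
proof -
  define m where "m = card I"
  obtain f where f: "bij_betw f {0..<m} I" using ex_bij_betw_nat_finite[OF fin] unfolding m_def by auto
  define h where "h = the_inv_into {0..<m} f"
  have fh: "f (h x) = x" if "x \<in> I" for x using f that unfolding h_def
    by (meson bij_betw_def f_the_inv_into_f_bij_betw)
  have hf: "h (f b) = b" if "b < m" for b using f that unfolding h_def
    by (simp add: bij_betw_def the_inv_into_f_f)
  have hI: "h x < m" if "x \<in> I" for x using f that unfolding h_def
    by (metis atLeastLessThan_iff bij_betw_def the_inv_into_into order_refl)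
  have fI: "f a \<in> I" if "a < m" for a using f that by (auto simp: bij_betw_def)
  have finj: "f a = f b \<longleftrightarrow> a = b" if "a < m" "b < m" for a b
    using f that by (auto simp: bij_betw_def inj_on_def)
  define A :: "int mat" where "A = mat m m (\<lambda>(a,b). \<Sum>j\<in>{j\<in>J. \<sigma> (f a) j = f b}. c j)"
  define v :: "complex vec" where "v = vec m (\<lambda>a. t (f a))"
  define A' where "A' = map_mat (of_int :: int \<Rightarrow> complex) A"
  have Ac: "A \<in> carrier_mat m m" unfolding A_def by auto
  have A'c: "A' \<in> carrier_mat m m" unfolding A'_def A_def by auto
  have vc: "v \<in> carrier_vec m" unfolding v_def by auto
  have Av: "A' *\<^sub>v v = q \<cdot>\<^sub>v v"
  proof (rule eq_vecI)
    fix a assume "a < dim_vec (q \<cdot>\<^sub>v v)"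
    hence a: "a < m" unfolding v_def by auto
    have "(A' *\<^sub>v v) $ a = (\<Sum>b<m. of_int (A $$ (a,b)) * t (f b))"
      using a unfolding A'_def A_def v_def by (auto simp: scalar_prod_def atLeast0LessThan intro!: sum.cong)
    also have "\<dots> = (\<Sum>b<m. \<Sum>j\<in>{j\<in>J. h (\<sigma> (f a) j) = b}. of_int (c j) * t (\<sigma> (f a) j))"
    proof (rule sum.cong[OF refl])
      fix b assume b: "b \<in> {..<m}"
      have set_eq: "{j\<in>J. h (\<sigma> (f a) j) = b} = {j\<in>J. \<sigma> (f a) j = f b}"
      proof (intro Collect_cong conj_cong refl iffI)
        fix j assume j: "j \<in> J" and e: "h (\<sigma> (f a) j) = b"
        show "\<sigma> (f a) j = f b" using fh[OF sig[OF fI[OF a] j]] e by simp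
      next
        fix j assume j: "j \<in> J" and e: "\<sigma> (f a) j = f b"
        show "h (\<sigma> (f a) j) = b" unfolding e using hf b by simp
      qed
      show "of_int (A $$ (a,b)) * t (f b) = (\<Sum>j\<in>{j\<in>J. h (\<sigma> (f a) j) = b}. of_int (c j) * t (\<sigma> (f a) j))"
        unfolding set_eq using a b
        by (auto simp: A_def sum_distrib_right intro!: sum.cong)
    qed
    also have "\<dots> = (\<Sum>j\<in>J. of_int (c j) * t (\<sigma> (f a) j))"
      by (rule sum.group[OF finJ]) (use hI sig fI a in auto)
    also have "\<dots> = q * t (f a)" using act[OF fI[OF a]] by simp
    also have "\<dots> = (q \<cdot>\<^sub>v v) $ a" using a unfolding v_def by simp
    finally show "(A' *\<^sub>v v) $ a = (q \<cdot>\<^sub>v v) $ a" .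
  qed (use A'c in \<open>auto simp: v_def\<close>)
  have v0: "v \<noteq> 0\<^sub>v m"
  proof
    assume "v = 0\<^sub>v m"
    hence "v $ (h ii) = 0" using hI[OF ii(1)] by simp
    thus False using hI[OF ii(1)] fh[OF ii(1)] ii unfolding v_def by simp
  qed
  have "eigenvector A' v q" unfolding eigenvector_def using A'c vc v0 Av by auto
  hence "eigenvalue A' q" unfolding eigenvalue_def by auto
  hence "poly (char_poly A') q = 0" using eigenvalue_root_char_poly[OF A'c] by simp
  hence root: "poly (of_int_poly (char_poly A)) q = 0"
    unfolding A'_def of_int_hom.char_poly_hom[OF Ac] .
  from degree_monic_char_poly[OF Ac] have "monic (char_poly A)" by simp
  hence "monic (of_int_poly (char_poly A) :: complex poly)" by simp
  moreover have "\<forall>i. Polynomial.coeff (of_int_poly (char_poly A) :: complex poly) i \<in> \<int>" by simp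
  ultimately show ?thesis using root by (intro algebraic_int.intros) auto
qed

definition rsum :: "nat \<Rightarrow> complex \<Rightarrow> complex" where
  "rsum N w = (\<Sum>k\<in>{k\<in>{1..N}. coprime k N}. w ^ k)"

lemma geom_full_int:
  fixes w :: complex assumes "w ^ N = 1"
  shows "(\<Sum>k\<in>{1..N}. w ^ k) \<in> \<int>"
proof (cases "w = 1")
  case True thus ?thesis by simp
next
  case False
  have "(\<Sum>k\<in>{1..M}. w ^ k) * (w - 1) = w ^ (Suc M) - w" for M
    by (induction M) (auto simp: algebra_simps)
  from this[of N] assms have "(\<Sum>k\<in>{1..N}. w ^ k) * (w - 1) = 0" by simp
  hence "(\<Sum>k\<in>{1..N}. w ^ k) = 0" using False by simp
  thus ?thesis by simp
qed

lemma rsum_split: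
  fixes w :: complex assumes N: "N > 0"
  shows "(\<Sum>k\<in>{1..N}. w ^ k) = (\<Sum>d\<in>{d. d dvd N}. rsum (N div d) (w ^ d))"
proof -
  have fin: "finite {d. d dvd N}" using N by simp
  have "(\<Sum>k\<in>{1..N}. w ^ k) = (\<Sum>d\<in>{d. d dvd N}. \<Sum>k\<in>{k\<in>{1..N}. gcd k N = d}. w ^ k)"
    by (rule sum.group[symmetric]) (auto simp: fin)
  also have "\<dots> = (\<Sum>d\<in>{d. d dvd N}. rsum (N div d) (w ^ d))"
  proof (rule sum.cong[OF refl])
    fix d assume "d \<in> {d. d dvd N}"
    then obtain e where e: "N = d * e" by auto
    hence d0: "d > 0" and e0: "e > 0" using N by auto
    have Ne: "N div d = e" using e d0 by simp
    have img: "(\<lambda>m. d * m) ` {m\<in>{1..e}. coprime m e} = {k\<in>{1..N}. gcd k N = d}"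
    proof (intro equalityI subsetI)
      fix k assume "k \<in> (\<lambda>m. d * m) ` {m\<in>{1..e}. coprime m e}"
      then obtain m where m: "m \<in> {1..e}" "coprime m e" "k = d * m" by auto
      have "gcd k N = d * gcd m e" unfolding m(3) e by (simp add: gcd_mult_distrib_nat)
      thus "k \<in> {k\<in>{1..N}. gcd k N = d}" using m d0 e by auto
    next
      fix k assume k: "k \<in> {k\<in>{1..N}. gcd k N = d}"
      hence "d dvd k" by (metis (mono_tags) gcd_dvd1 mem_Collect_eq)
      then obtain m where m: "k = d * m" by auto
      have "d * gcd m e = d" using k unfolding m e by (simp add: gcd_mult_distrib_nat)
      hence "gcd m e = 1" using d0 by simp
      moreover have "m \<in> {1..e}" using k d0 unfolding m e by auto
      ultimately show "k \<in> (\<lambda>m. d * m) ` {m\<in>{1..e}. coprime m e}"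
        using m by (auto simp: coprime_iff_gcd_eq_1)
    qed
    have "(\<Sum>k\<in>{k\<in>{1..N}. gcd k N = d}. w ^ k) = (\<Sum>m\<in>{m\<in>{1..e}. coprime m e}. w ^ (d * m))"
      unfolding img[symmetric] using d0 by (subst sum.reindex) (auto simp: inj_on_def)
    also have "\<dots> = rsum (N div d) (w ^ d)" unfolding Ne rsum_def by (simp add: power_mult)
    finally show "(\<Sum>k\<in>{k\<in>{1..N}. gcd k N = d}. w ^ k) = rsum (N div d) (w ^ d)" .
  qed
  finally show ?thesis .
qed

lemma rsum_int:
  assumes "N > 0" "w ^ N = 1"
  shows "rsum N w \<in> \<int>"
  using assms
proof (induction N arbitrary: w rule: less_induct)
  case (less N)
  have fin: "finite {d. d dvd N}" using less.prems by simp
  have one: "1 \<in> {d. d dvd N}" by simp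
  have "(\<Sum>k\<in>{1..N}. w ^ k) = rsum N w + (\<Sum>d\<in>{d. d dvd N} - {1}. rsum (N div d) (w ^ d))"
    unfolding rsum_split[OF less.prems(1)] sum.remove[OF fin one] by simp
  hence eq: "rsum N w = (\<Sum>k\<in>{1..N}. w ^ k) - (\<Sum>d\<in>{d. d dvd N} - {1}. rsum (N div d) (w ^ d))"
    by (simp add: algebra_simps)
  have "(\<Sum>d\<in>{d. d dvd N} - {1}. rsum (N div d) (w ^ d)) \<in> \<int>"
  proof (rule Ints_sum)
    fix d assume d: "d \<in> {d. d dvd N} - {1}"
    then obtain e where e: "N = d * e" by auto
    hence d0: "d > 1" and e0: "e > 0" using less.prems d by (auto simp: nat_neq_iff)
    have "N div d < N" using d0 less.prems by simp
    moreover have "N div d > 0" using e e0 d0 by simp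
    moreover have "(w ^ d) ^ (N div d) = 1" using e d0 less.prems by (simp add: power_mult[symmetric])
    ultimately show "rsum (N div d) (w ^ d) \<in> \<int>" using less.IH by blast
  qed
  thus ?case unfolding eq using geom_full_int[OF less.prems(2)] by (intro Ints_diff)
qed

locale fgroup = group +
  assumes fin: "finite (carrier G)"
begin

lemma inv_cancel_left [simp]:
  "x \<in> carrier G \<Longrightarrow> y \<in> carrier G \<Longrightarrow> inv x \<otimes> (x \<otimes> y) = y"
  "x \<in> carrier G \<Longrightarrow> y \<in> carrier G \<Longrightarrow> x \<otimes> (inv x \<otimes> y) = y"
  by (simp_all add: m_assoc[symmetric])

definition cls :: "'a \<Rightarrow> nat" where "cls g = card (conj_class G g)"

lemma conj_class_sub: "g \<in> carrier G \<Longrightarrow> conj_class G g \<subseteq> carrier G"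
  unfolding conj_class_def by auto

lemma conj_class_self: "g \<in> carrier G \<Longrightarrow> g \<in> conj_class G g"
  unfolding conj_class_def by (auto intro!: exI[of _ \<one>])

lemma conj_class_eq:
  assumes g: "g \<in> carrier G" and b: "b \<in> conj_class G g"
  shows "conj_class G b = conj_class G g"
proof -
  from b obtain h where h: "h \<in> carrier G" and bdef: "b = h \<otimes> g \<otimes> inv h" unfolding conj_class_def by auto
  show ?thesis
  proof (intro equalityI subsetI)
    fix x assume "x \<in> conj_class G b"
    then obtain k where k: "k \<in> carrier G" and x: "x = k \<otimes> b \<otimes> inv k" unfolding conj_class_def by auto
    have "x = (k \<otimes> h) \<otimes> g \<otimes> inv (k \<otimes> h)"
      unfolding x bdef using k h g by (simp add: m_assoc inv_mult_group)
    thus "x \<in> conj_class G g" unfolding conj_class_def using k h by auto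
  next
    fix x assume "x \<in> conj_class G g"
    then obtain k where k: "k \<in> carrier G" and x: "x = k \<otimes> g \<otimes> inv k" unfolding conj_class_def by auto
    have "g = inv h \<otimes> b \<otimes> h" unfolding bdef using h g by (simp add: m_assoc)
    hence "x = (k \<otimes> inv h) \<otimes> b \<otimes> inv (k \<otimes> inv h)"
      unfolding x using k h g bdef by (simp add: m_assoc inv_mult_group)
    thus "x \<in> conj_class G b" unfolding conj_class_def using k h by auto
  qed
qed

lemma conj_in_class: "g \<in> carrier G \<Longrightarrow> h \<in> carrier G \<Longrightarrow> h \<otimes> g \<otimes> inv h \<in> conj_class G g"
  unfolding conj_class_def by auto

lemma cls_conj: "g \<in> carrier G \<Longrightarrow> h \<in> carrier G \<Longrightarrow> cls (h \<otimes> g \<otimes> inv h) = cls g"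
  unfolding cls_def using conj_class_eq[OF _ conj_in_class] by presburger

lemma conj_bij: assumes h: "h \<in> carrier G"
  shows "bij_betw (\<lambda>g. h \<otimes> g \<otimes> inv h) (carrier G) (carrier G)"
proof (rule bij_betwI[where g = "\<lambda>g. inv h \<otimes> g \<otimes> h"])
  show "(\<lambda>g. h \<otimes> g \<otimes> inv h) \<in> carrier G \<rightarrow> carrier G" using h by auto
  show "(\<lambda>g. inv h \<otimes> g \<otimes> h) \<in> carrier G \<rightarrow> carrier G" using h by auto
  fix x assume x: "x \<in> carrier G"
  show "inv h \<otimes> (h \<otimes> x \<otimes> inv h) \<otimes> h = x" using x h by (simp add: m_assoc)
  show "h \<otimes> (inv h \<otimes> x \<otimes> h) \<otimes> inv h = x" using x h by (simp add: m_assoc)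
qed

lemma lmult_bij: assumes h: "h \<in> carrier G"
  shows "bij_betw (\<lambda>g. h \<otimes> g) (carrier G) (carrier G)"
proof (rule bij_betwI[where g = "\<lambda>g. inv h \<otimes> g"])
  fix x assume x: "x \<in> carrier G"
  show "inv h \<otimes> (h \<otimes> x) = x" using x h by (simp add: m_assoc[symmetric])
  show "h \<otimes> (inv h \<otimes> x) = x" using x h by (simp add: m_assoc[symmetric])
qed (use h in auto)

lemma sum_conj_reindex:
  assumes h: "h \<in> carrier G"
  shows "(\<Sum>g\<in>carrier G. F (h \<otimes> g \<otimes> inv h)) = (\<Sum>g\<in>carrier G. F g)"
  using sum.reindex_bij_betw[OF conj_bij[OF h], of F] .

lemma sum_lmult_reindex:
  assumes h: "h \<in> carrier G"
  shows "(\<Sum>g\<in>carrier G. F (h \<otimes> g)) = (\<Sum>g\<in>carrier G. F g)"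
  using sum.reindex_bij_betw[OF lmult_bij[OF h], of F] .

lemma conj_class_disj:
  assumes "C1 \<in> Conj G" "C2 \<in> Conj G" "C1 \<noteq> C2"
  shows "C1 \<inter> C2 = {}"
proof (rule ccontr)
  assume "C1 \<inter> C2 \<noteq> {}"
  then obtain x where x: "x \<in> C1" "x \<in> C2" by auto
  from assms obtain a b where a: "a \<in> carrier G" "C1 = conj_class G a"
    and b: "b \<in> carrier G" "C2 = conj_class G b" unfolding Conj_def by auto
  have "C1 = conj_class G x" using conj_class_eq[OF a(1)] x a by simp
  moreover have "C2 = conj_class G x" using conj_class_eq[OF b(1)] x b by simp
  ultimately show False using assms by simp
qed

lemma Union_Conj: "\<Union> (Conj G) = carrier G"
  unfolding Conj_def using conj_class_sub conj_class_self by blast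

lemma sum_over_classes:
  "(\<Sum>g\<in>carrier G. F g) = (\<Sum>C\<in>Conj G. \<Sum>g\<in>C. F g)"
proof -
  have fC: "finite (Conj G)" unfolding Conj_def using fin by simp
  have fe: "\<forall>C\<in>Conj G. finite C" unfolding Conj_def using fin conj_class_sub finite_subset by blast
  have pw: "\<forall>A\<in>Conj G. \<forall>B\<in>Conj G. A \<noteq> B \<longrightarrow> A \<inter> B = {}" using conj_class_disj by blast
  show ?thesis
    unfolding Union_Conj[symmetric] sum.Union_disjoint[OF fe pw] by simp
qed

lemma conj_pow:
  assumes g: "g \<in> carrier G" and h: "h \<in> carrier G"
  shows "(h \<otimes> g \<otimes> inv h) [^] (k::nat) = h \<otimes> (g [^] k) \<otimes> inv h"
proof (induction k)
  case 0 thus ?case using h by simp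
next
  case (Suc k)
  have "(h \<otimes> g \<otimes> inv h) [^] Suc k = (h \<otimes> (g [^] k) \<otimes> inv h) \<otimes> (h \<otimes> g \<otimes> inv h)"
    using Suc by simp
  also have "\<dots> = h \<otimes> (g [^] k \<otimes> g) \<otimes> inv h"
  proof -
    have "(h \<otimes> (g [^] k) \<otimes> inv h) \<otimes> (h \<otimes> g \<otimes> inv h) = h \<otimes> (g [^] k) \<otimes> (inv h \<otimes> h) \<otimes> g \<otimes> inv h"
      using g h by (simp add: m_assoc)
    also have "\<dots> = h \<otimes> (g [^] k \<otimes> g) \<otimes> inv h" using g h by (simp add: m_assoc)
    finally show ?thesis .
  qed
  also have "\<dots> = h \<otimes> (g [^] Suc k) \<otimes> inv h" by simp
  finally show ?case .
qed

definition N :: nat where "N = order G"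

lemma N_pos: "N > 0"
  unfolding N_def order_def using fin one_closed by (auto simp: card_gt_0_iff)

lemma powN: "g \<in> carrier G \<Longrightarrow> g [^] N = \<one>"
  unfolding N_def using pow_order_eq_1 by simp

lemma pow_inj:
  assumes k: "coprime k N" and k0: "k \<noteq> 0"
  shows "inj_on (\<lambda>g. g [^] k) (carrier G)"
proof -
  obtain x y where xy: "k * x = N * y + gcd k N" using bezout_nat[OF k0] by blast
  hence xy1: "k * x = N * y + 1" using k by simp
  have hback: "(g [^] k) [^] x = g" if g: "g \<in> carrier G" for g
  proof -
    have "(g [^] k) [^] x = g [^] (N * y + 1)" using g xy1 by (simp add: nat_pow_pow)
    also have "\<dots> = (g [^] N) [^] y \<otimes> g" using g
      by (simp add: nat_pow_pow[symmetric] nat_pow_mult[symmetric])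
    also have "\<dots> = g" using g powN by simp
    finally show ?thesis .
  qed
  show ?thesis unfolding inj_on_def
  proof (intro ballI impI)
    fix a b assume a: "a \<in> carrier G" and b: "b \<in> carrier G" and e: "a [^] k = b [^] k"
    have "a = (a [^] k) [^] x" using hback[OF a] by simp
    also have "\<dots> = (b [^] k) [^] x" using e by simp
    also have "\<dots> = b" using hback[OF b] .
    finally show "a = b" .
  qed
qed

lemma pow_bij:
  assumes k: "coprime k N" and k0: "k \<noteq> 0"
  shows "bij_betw (\<lambda>g. g [^] k) (carrier G) (carrier G)"
proof -
  have "(\<lambda>g. g [^] k) ` carrier G \<subseteq> carrier G" by auto
  moreover have "inj_on (\<lambda>g. g [^] k) (carrier G)" using pow_inj[OF k k0] .
  ultimately have "(\<lambda>g. g [^] k) ` carrier G = carrier G"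
    using fin by (meson endo_inj_surj)
  thus ?thesis using pow_inj[OF k k0] unfolding bij_betw_def by simp
qed

lemma cls_pow:
  assumes g: "g \<in> carrier G" and k: "coprime k N" and k0: "k \<noteq> 0"
  shows "cls (g [^] k) = cls g"
proof -
  have "conj_class G (g [^] k) = (\<lambda>x. x [^] k) ` conj_class G g"
  proof (intro equalityI subsetI)
    fix x assume "x \<in> conj_class G (g [^] k)"
    then obtain h where h: "h \<in> carrier G" "x = h \<otimes> g [^] k \<otimes> inv h" unfolding conj_class_def by auto
    hence "x = (h \<otimes> g \<otimes> inv h) [^] k" using conj_pow[OF g h(1)] by simp
    moreover have "h \<otimes> g \<otimes> inv h \<in> conj_class G g" using conj_in_class[OF g h(1)] .
    ultimately show "x \<in> (\<lambda>x. x [^] k) ` conj_class G g" by blast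
  next
    fix x assume "x \<in> (\<lambda>x. x [^] k) ` conj_class G g"
    then obtain h where h: "h \<in> carrier G" "x = (h \<otimes> g \<otimes> inv h) [^] k" unfolding conj_class_def by auto
    hence "x = h \<otimes> g [^] k \<otimes> inv h" using conj_pow[OF g h(1)] by simp
    thus "x \<in> conj_class G (g [^] k)" using conj_in_class[OF _ h(1)] g by simp
  qed
  moreover have "inj_on (\<lambda>x. x [^] k) (conj_class G g)"
    using pow_inj[OF k k0] conj_class_sub[OF g] inj_on_subset by blast
  ultimately show ?thesis unfolding cls_def by (simp add: card_image)
qed

lemma centre_subgroup: "subgroup (centre G) G"
proof (rule subgroupI)
  show "centre G \<subseteq> carrier G" unfolding centre_def by auto
  show "centre G \<noteq> {}" unfolding centre_def by (auto intro!: exI[of _ \<one>])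
next
  fix a assume a: "a \<in> centre G"
  hence ac: "a \<in> carrier G" and com: "\<forall>g\<in>carrier G. a \<otimes> g = g \<otimes> a" unfolding centre_def by auto
  have "inv a \<otimes> g = g \<otimes> inv a" if g: "g \<in> carrier G" for g
  proof -
    have "inv a \<otimes> g = inv a \<otimes> (g \<otimes> a) \<otimes> inv a" using g ac by (simp add: m_assoc)
    also have "\<dots> = inv a \<otimes> (a \<otimes> g) \<otimes> inv a" using com g by simp
    also have "\<dots> = g \<otimes> inv a" using g ac by (simp add: m_assoc[symmetric])
    finally show ?thesis .
  qed
  thus "inv a \<in> centre G" using ac unfolding centre_def by auto
next
  fix a b assume a: "a \<in> centre G" and b: "b \<in> centre G"
  hence ac: "a \<in> carrier G" "b \<in> carrier G" unfolding centre_def by auto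
  have "a \<otimes> b \<otimes> g = g \<otimes> (a \<otimes> b)" if g: "g \<in> carrier G" for g
  proof -
    have "a \<otimes> b \<otimes> g = a \<otimes> (b \<otimes> g)" using ac g by (simp add: m_assoc)
    also have "\<dots> = a \<otimes> (g \<otimes> b)" using b g unfolding centre_def by auto
    also have "\<dots> = (a \<otimes> g) \<otimes> b" using ac g by (simp add: m_assoc)
    also have "\<dots> = (g \<otimes> a) \<otimes> b" using a g unfolding centre_def by auto
    also have "\<dots> = g \<otimes> (a \<otimes> b)" using ac g by (simp add: m_assoc)
    finally show ?thesis .
  qed
  thus "a \<otimes> b \<in> centre G" using ac unfolding centre_def by auto
qed

lemma centre_comm: "z \<in> centre G \<Longrightarrow> g \<in> carrier G \<Longrightarrow> z \<otimes> g = g \<otimes> z"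
  unfolding centre_def by auto

lemma cls_centre_mult:
  assumes z: "z \<in> centre G" and g: "g \<in> carrier G"
  shows "cls (z \<otimes> g) = cls g"
proof -
  have zc: "z \<in> carrier G" using z unfolding centre_def by auto
  have "conj_class G (z \<otimes> g) = (\<lambda>x. z \<otimes> x) ` conj_class G g"
  proof -
    have "h \<otimes> (z \<otimes> g) \<otimes> inv h = z \<otimes> (h \<otimes> g \<otimes> inv h)" if h: "h \<in> carrier G" for h
      using centre_comm[OF z h] h zc g by (simp add: m_assoc[symmetric])
    note eq = this
    show ?thesis
    proof (intro equalityI subsetI)
      fix x assume "x \<in> conj_class G (z \<otimes> g)"
      then obtain h where h: "h \<in> carrier G" "x = h \<otimes> (z \<otimes> g) \<otimes> inv h" unfolding conj_class_def by auto
      thus "x \<in> (\<lambda>x. z \<otimes> x) ` conj_class G g" using eq[OF h(1)] conj_in_class[OF g h(1)] by auto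
    next
      fix x assume "x \<in> (\<lambda>x. z \<otimes> x) ` conj_class G g"
      then obtain h where h: "h \<in> carrier G" "x = z \<otimes> (h \<otimes> g \<otimes> inv h)" unfolding conj_class_def by auto
      thus "x \<in> conj_class G (z \<otimes> g)" using eq[OF h(1)] conj_in_class[OF _ h(1), of "z \<otimes> g"] zc g by auto
    qed
  qed
  moreover have "inj_on (\<lambda>x. z \<otimes> x) (conj_class G g)"
    unfolding inj_on_def
  proof (intro ballI impI)
    fix x y assume x: "x \<in> conj_class G g" and y: "y \<in> conj_class G g" and e: "z \<otimes> x = z \<otimes> y"
    show "x = y" using x y e conj_class_sub[OF g] zc by (metis Units_eq Units_l_cancel subsetD)
  qed
  ultimately show ?thesis unfolding cls_def by (simp add: card_image)
qed

end

locale irrep = fgroup +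
  fixes n :: nat and \<rho> :: "'a \<Rightarrow> complex mat"
  assumes irr: "irreducible_rep G n \<rho>"
begin

definition chi :: "'a \<Rightarrow> complex" where "chi g = mtrace (\<rho> g)"

lemma rep: "is_rep G n \<rho>" using irr unfolding irreducible_rep_def by auto
lemma n_pos: "n > 0" using irr unfolding irreducible_rep_def by auto
lemma rhoC: "g \<in> carrier G \<Longrightarrow> \<rho> g \<in> carrier_mat n n" using rep unfolding is_rep_def by auto
lemma rho_mult: "g \<in> carrier G \<Longrightarrow> h \<in> carrier G \<Longrightarrow> \<rho> (g \<otimes> h) = \<rho> g * \<rho> h"
  using rep unfolding is_rep_def by auto
lemma rho_one: "\<rho> \<one> = 1\<^sub>m n" using rep unfolding is_rep_def by auto

lemma rho_inv: assumes g: "g \<in> carrier G"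
  shows "\<rho> (inv g) * \<rho> g = 1\<^sub>m n" "\<rho> g * \<rho> (inv g) = 1\<^sub>m n"
  using rho_mult[of "inv g" g] rho_mult[of g "inv g"] g rho_one by auto

lemma chi_conj: assumes g: "g \<in> carrier G" and h: "h \<in> carrier G"
  shows "chi (h \<otimes> g \<otimes> inv h) = chi g"
proof -
  have "chi (h \<otimes> g \<otimes> inv h) = mtrace ((\<rho> h * \<rho> g) * \<rho> (inv h))"
    unfolding chi_def using g h by (simp add: rho_mult)
  also have "\<dots> = mtrace (\<rho> (inv h) * (\<rho> h * \<rho> g))"
    by (rule mtrace_mult_comm[of _ n n]) (use rhoC[OF g] rhoC[OF h] rhoC[OF inv_closed[OF h]] in \<open>auto intro: mult_carrier_mat\<close>)
  also have "\<rho> (inv h) * (\<rho> h * \<rho> g) = (\<rho> (inv h) * \<rho> h) * \<rho> g"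
    using g h rhoC by (intro assoc_mult_mat[symmetric, of _ n n _ n _ n]) auto
  also have "\<dots> = \<rho> g" using rho_inv[OF h] rhoC[OF g] by simp
  finally show ?thesis unfolding chi_def .
qed

lemma rho_pow: assumes g: "g \<in> carrier G" shows "\<rho> (g [^] (k::nat)) = \<rho> g ^\<^sub>m k"
proof (induction k)
  case 0 thus ?case using rho_one rhoC[OF g] by simp
next
  case (Suc k) thus ?case using g by (simp add: rho_mult)
qed

lemma eigen:
  assumes g: "g \<in> carrier G"
  shows "\<exists>es. length es = n \<and> (\<forall>e\<in>set es. e ^ N = 1) \<and> (\<forall>k. chi (g [^] k) = (\<Sum>e\<leftarrow>es. e ^ k))"
proof -
  have "\<rho> g ^\<^sub>m N = 1\<^sub>m n" using rho_pow[OF g, of N] powN[OF g] rho_one by simp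
  from trace_pow_eigen[OF rhoC[OF g] this] show ?thesis
    unfolding chi_def using rho_pow[OF g] by simp
qed

definition eig :: "'a \<Rightarrow> complex list" where
  "eig g = (SOME es. length es = n \<and> (\<forall>e\<in>set es. e ^ N = 1) \<and> (\<forall>k. chi (g [^] k) = (\<Sum>e\<leftarrow>es. e ^ k)))"

lemma eig: assumes g: "g \<in> carrier G"
  shows "length (eig g) = n" "\<And>e. e \<in> set (eig g) \<Longrightarrow> e ^ N = 1" "\<And>k. chi (g [^] k) = (\<Sum>e\<leftarrow>eig g. e ^ k)"
proof -
  have "length (eig g) = n \<and> (\<forall>e\<in>set (eig g). e ^ N = 1) \<and> (\<forall>k. chi (g [^] k) = (\<Sum>e\<leftarrow>eig g. e ^ k))"
    unfolding eig_def by (rule someI_ex[OF eigen[OF g]])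
  thus "length (eig g) = n" "\<And>e. e \<in> set (eig g) \<Longrightarrow> e ^ N = 1" "\<And>k. chi (g [^] k) = (\<Sum>e\<leftarrow>eig g. e ^ k)"
    by blast+
qed

lemma chi_eig: assumes g: "g \<in> carrier G" shows "chi g = (\<Sum>e\<leftarrow>eig g. e)"
proof -
  have "chi (g [^] (1::nat)) = (\<Sum>e\<leftarrow>eig g. e ^ 1)" by (rule eig(3)[OF g])
  thus ?thesis using g by simp
qed

definition msum :: "('a \<Rightarrow> complex) \<Rightarrow> complex mat" where
  "msum f = mat n n (\<lambda>(i,j). \<Sum>g\<in>carrier G. f g * \<rho> g $$ (i,j))"

lemma msum_carrier: "msum f \<in> carrier_mat n n" unfolding msum_def by auto

lemma msum_mult_right: assumes B: "B \<in> carrier_mat n n" and i: "i < n" and j: "j < n"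
  shows "(msum f * B) $$ (i,j) = (\<Sum>g\<in>carrier G. f g * (\<rho> g * B) $$ (i,j))"
proof -
  have "(msum f * B) $$ (i,j) = (\<Sum>k<n. (\<Sum>g\<in>carrier G. f g * \<rho> g $$ (i,k)) * B $$ (k,j))"
    using B i j unfolding msum_def by (auto simp: scalar_prod_def atLeast0LessThan intro!: sum.cong)
  also have "\<dots> = (\<Sum>g\<in>carrier G. \<Sum>k<n. f g * \<rho> g $$ (i,k) * B $$ (k,j))"
    by (simp add: sum_distrib_right sum.swap[of _ "{..<n}"])
  also have "\<dots> = (\<Sum>g\<in>carrier G. f g * (\<rho> g * B) $$ (i,j))"
  proof (rule sum.cong[OF refl])
    fix g assume g: "g \<in> carrier G"
    show "(\<Sum>k<n. f g * \<rho> g $$ (i,k) * B $$ (k,j)) = f g * (\<rho> g * B) $$ (i,j)"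
      using rhoC[OF g] B i j by (auto simp: scalar_prod_def atLeast0LessThan sum_distrib_left mult.assoc intro!: sum.cong)
  qed
  finally show ?thesis .
qed

lemma msum_mult_left: assumes B: "B \<in> carrier_mat n n" and i: "i < n" and j: "j < n"
  shows "(B * msum f) $$ (i,j) = (\<Sum>g\<in>carrier G. f g * (B * \<rho> g) $$ (i,j))"
proof -
  have "(B * msum f) $$ (i,j) = (\<Sum>k<n. B $$ (i,k) * (\<Sum>g\<in>carrier G. f g * \<rho> g $$ (k,j)))"
    using B i j unfolding msum_def by (auto simp: scalar_prod_def atLeast0LessThan intro!: sum.cong)
  also have "\<dots> = (\<Sum>g\<in>carrier G. \<Sum>k<n. f g * (B $$ (i,k) * \<rho> g $$ (k,j)))"
    by (simp add: sum_distrib_left sum.swap[of _ "{..<n}"] mult.left_commute)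
  also have "\<dots> = (\<Sum>g\<in>carrier G. f g * (B * \<rho> g) $$ (i,j))"
  proof (rule sum.cong[OF refl])
    fix g assume g: "g \<in> carrier G"
    show "(\<Sum>k<n. f g * (B $$ (i,k) * \<rho> g $$ (k,j))) = f g * (B * \<rho> g) $$ (i,j)"
      using rhoC[OF g] B i j by (auto simp: scalar_prod_def atLeast0LessThan sum_distrib_left intro!: sum.cong)
  qed
  finally show ?thesis .
qed

lemma class_fun_schur:
  assumes cf: "\<And>g h. g \<in> carrier G \<Longrightarrow> h \<in> carrier G \<Longrightarrow> f (h \<otimes> g \<otimes> inv h) = f g"
    and y: "y \<in> carrier G"
  shows "of_nat n * (\<Sum>g\<in>carrier G. f g * chi (g \<otimes> y)) = (\<Sum>g\<in>carrier G. f g * chi g) * chi y"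
proof -
  let ?M = "msum f"
  have comm: "?M * \<rho> h = \<rho> h * ?M" if h: "h \<in> carrier G" for h
  proof (rule eq_matI)
    fix i j assume i: "i < dim_row (\<rho> h * ?M)" and j: "j < dim_col (\<rho> h * ?M)"
    hence i: "i < n" and j: "j < n" using rhoC[OF h] msum_carrier[of f] by auto
    have "(?M * \<rho> h) $$ (i,j) = (\<Sum>g\<in>carrier G. f g * \<rho> (g \<otimes> h) $$ (i,j))"
      unfolding msum_mult_right[OF rhoC[OF h] i j] using h by (simp add: rho_mult)
    also have "\<dots> = (\<Sum>g\<in>carrier G. f (h \<otimes> g \<otimes> inv h) * \<rho> ((h \<otimes> g \<otimes> inv h) \<otimes> h) $$ (i,j))"
      using sum_conj_reindex[OF h, of "\<lambda>g. f g * \<rho> (g \<otimes> h) $$ (i,j)"] by simp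
    also have "\<dots> = (\<Sum>g\<in>carrier G. f g * \<rho> (h \<otimes> g) $$ (i,j))"
      using cf h by (intro sum.cong) (auto simp: m_assoc)
    also have "\<dots> = (\<rho> h * ?M) $$ (i,j)"
      unfolding msum_mult_left[OF rhoC[OF h] i j] using h by (simp add: rho_mult)
    finally show "(?M * \<rho> h) $$ (i,j) = (\<rho> h * ?M) $$ (i,j)" .
  qed (use rhoC[OF h] msum_carrier[of f] in auto)
  obtain c where c: "?M = c \<cdot>\<^sub>m 1\<^sub>m n"
    using schur_lemma[OF irr msum_carrier comm] by blast
  have tr: "mtrace (?M * B) = (\<Sum>g\<in>carrier G. f g * mtrace (\<rho> g * B))" if B: "B \<in> carrier_mat n n" for B
  proof -
    have "mtrace (?M * B) = (\<Sum>i<n. \<Sum>g\<in>carrier G. f g * (\<rho> g * B) $$ (i,i))"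
    proof -
      have "dim_row (?M * B) = n" using msum_carrier[of f] by simp
      moreover have "(\<Sum>i<n. (?M * B) $$ (i,i)) = (\<Sum>i<n. \<Sum>g\<in>carrier G. f g * (\<rho> g * B) $$ (i,i))"
        by (rule sum.cong[OF refl], rule msum_mult_right[OF B]) auto
      ultimately show ?thesis unfolding mtrace_def by simp
    qed
    also have "\<dots> = (\<Sum>g\<in>carrier G. f g * mtrace (\<rho> g * B))"
    proof -
      have "(\<Sum>i<n. \<Sum>g\<in>carrier G. f g * (\<rho> g * B) $$ (i,i)) = (\<Sum>g\<in>carrier G. \<Sum>i<n. f g * (\<rho> g * B) $$ (i,i))"
        by (rule sum.swap)
      also have "\<dots> = (\<Sum>g\<in>carrier G. f g * mtrace (\<rho> g * B))"
        unfolding mtrace_def using rhoC by (intro sum.cong) (auto simp: sum_distrib_left)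
      finally show ?thesis .
    qed
    finally show ?thesis .
  qed
  have "(\<Sum>g\<in>carrier G. f g * chi g) = c * of_nat n"
  proof -
    have "(\<Sum>g\<in>carrier G. f g * chi g) = mtrace (?M * 1\<^sub>m n)"
      unfolding tr[OF one_carrier_mat] chi_def by (intro sum.cong refl) (simp add: right_mult_one_mat[OF rhoC])
    also have "\<dots> = c * of_nat n" using c msum_carrier by (simp add: mtrace_def)
    finally show ?thesis .
  qed
  moreover have "(\<Sum>g\<in>carrier G. f g * chi (g \<otimes> y)) = c * chi y"
  proof -
    have "(\<Sum>g\<in>carrier G. f g * chi (g \<otimes> y)) = mtrace (?M * \<rho> y)"
      unfolding tr[OF rhoC[OF y]] chi_def using y by (simp add: rho_mult)
    also have "\<dots> = c * chi y" unfolding c chi_def using rhoC[OF y]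
      by (simp add: mtrace_def sum_distrib_left)
    finally show ?thesis .
  qed
  ultimately show ?thesis by (simp add: algebra_simps)
qed

definition lam :: "'a \<Rightarrow> complex" where "lam z = (SOME c. \<rho> z = c \<cdot>\<^sub>m 1\<^sub>m n)"

lemma lam: assumes z: "z \<in> centre G" shows "\<rho> z = lam z \<cdot>\<^sub>m 1\<^sub>m n"
proof -
  have zc: "z \<in> carrier G" using z unfolding centre_def by auto
  have "\<exists>c. \<rho> z = c \<cdot>\<^sub>m 1\<^sub>m n"
    by (rule schur_lemma[OF irr rhoC[OF zc]]) (use z zc in \<open>auto simp: rho_mult[symmetric] centre_comm\<close>)
  thus ?thesis unfolding lam_def by (rule someI_ex)
qed

lemma chi_centre: assumes z: "z \<in> centre G" and g: "g \<in> carrier G"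
  shows "chi (z \<otimes> g) = lam z * chi g"
proof -
  have zc: "z \<in> carrier G" using z unfolding centre_def by auto
  show ?thesis unfolding chi_def using rho_mult[OF zc g] lam[OF z] rhoC[OF g]
    by (simp add: mtrace_def sum_distrib_left)
qed

lemma lam_pow: assumes z: "z \<in> centre G" shows "lam z ^ N = 1"
proof -
  have zc: "z \<in> carrier G" using z unfolding centre_def by auto
  have "\<rho> (z [^] N) = 1\<^sub>m n" using powN[OF zc] rho_one by simp
  moreover have "\<rho> (z [^] N) = (lam z \<cdot>\<^sub>m 1\<^sub>m n) ^\<^sub>m N" using rho_pow[OF zc] lam[OF z] by simp
  moreover have "(c \<cdot>\<^sub>m 1\<^sub>m n) ^\<^sub>m k = (c ^ k) \<cdot>\<^sub>m 1\<^sub>m n" for c :: complex and k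
    by (induction k) (auto intro!: eq_matI)
  ultimately have "(lam z ^ N) \<cdot>\<^sub>m 1\<^sub>m n = 1\<^sub>m n" by simp
  hence "((lam z ^ N) \<cdot>\<^sub>m 1\<^sub>m n) $$ (0,0) = (1\<^sub>m n :: complex mat) $$ (0,0)" by simp
  thus ?thesis using n_pos by simp
qed

end

context irrep
begin

lemma chi_one: "chi \<one> = of_nat n"
  unfolding chi_def rho_one by (simp add: mtrace_def)

lemma S_rational:
  assumes B: "irrep G n' \<rho>'"
  shows "(\<Sum>g\<in>carrier G. of_nat (cls g) * chi g * cnj (irrep.chi \<rho>' g)) \<in> \<rat>"
proof -
  interpret B: irrep G n' \<rho>' by (rule B)
  define S where "S = (\<Sum>g\<in>carrier G. of_nat (cls g) * chi g * cnj (B.chi g))"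
  define K where "K = {k\<in>{1..N}. coprime k N}"
  have finK: "finite K" unfolding K_def by simp
  have oneK: "1 \<in> K" unfolding K_def using N_pos by auto
  have Sk: "S = (\<Sum>g\<in>carrier G. of_nat (cls g) * chi (g [^] k) * cnj (B.chi (g [^] k)))" if k: "k \<in> K" for k
  proof -
    have kc: "coprime k N" and k0: "k \<noteq> 0" using k unfolding K_def by auto
    have "S = (\<Sum>g\<in>carrier G. of_nat (cls (g [^] k)) * chi (g [^] k) * cnj (B.chi (g [^] k)))"
      unfolding S_def using sum.reindex_bij_betw[OF pow_bij[OF kc k0],
        of "\<lambda>g. of_nat (cls g) * chi g * cnj (B.chi g)"] by simp
    also have "\<dots> = (\<Sum>g\<in>carrier G. of_nat (cls g) * chi (g [^] k) * cnj (B.chi (g [^] k)))"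
      using cls_pow[OF _ kc k0] by (intro sum.cong) auto
    finally show ?thesis .
  qed
  have expand: "chi (g [^] k) * cnj (B.chi (g [^] k)) =
      (\<Sum>i<n. \<Sum>j<n'. (eig g ! i * cnj (B.eig g ! j)) ^ k)" if g: "g \<in> carrier G" for g k
  proof -
    have "chi (g [^] k) = (\<Sum>i<n. (eig g ! i) ^ k)"
      using eig(3)[OF g, of k] eig(1)[OF g] by (simp add: sum_list_sum_nth atLeast0LessThan)
    moreover have "B.chi (g [^] k) = (\<Sum>j<n'. (B.eig g ! j) ^ k)"
      using B.eig(3)[OF g, of k] B.eig(1)[OF g] by (simp add: sum_list_sum_nth atLeast0LessThan)
    ultimately show ?thesis
      by (simp add: cnj_sum sum_product power_mult_distrib)
  qed
  have "of_nat (card K) * S = (\<Sum>k\<in>K. S)" by simp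
  also have "\<dots> = (\<Sum>k\<in>K. \<Sum>g\<in>carrier G. of_nat (cls g) * (\<Sum>i<n. \<Sum>j<n'. (eig g ! i * cnj (B.eig g ! j)) ^ k))"
    using Sk expand by (intro sum.cong refl) (auto simp: mult.assoc)
  also have "\<dots> = (\<Sum>g\<in>carrier G. of_nat (cls g) * (\<Sum>i<n. \<Sum>j<n'. rsum N (eig g ! i * cnj (B.eig g ! j))))"
    unfolding rsum_def K_def[symmetric]
    by (subst sum.swap) (simp add: sum_distrib_left sum.swap[of _ K])
  also have "\<dots> \<in> \<int>"
  proof (intro Ints_sum Ints_mult)
    fix g i j assume g: "g \<in> carrier G" and i: "i \<in> {..<n}" and j: "j \<in> {..<n'}"
    have "eig g ! i ^ N = 1" using eig(2)[OF g] eig(1)[OF g] i by simp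
    moreover have "B.eig g ! j ^ N = 1" using B.eig(2)[OF g] B.eig(1)[OF g] j by simp
    ultimately have "(eig g ! i * cnj (B.eig g ! j)) ^ N = 1"
      by (metis complex_cnj_one complex_cnj_power mult_1 power_mult_distrib)
    thus "rsum N (eig g ! i * cnj (B.eig g ! j)) \<in> \<int>" using rsum_int N_pos by blast
  qed auto
  finally have "of_nat (card K) * S \<in> \<int>" .
  hence "of_nat (card K) * S \<in> \<rat>" using Ints_subset_Rats by blast
  moreover have "card K > 0" using finK oneK by (auto simp: card_gt_0_iff)
  ultimately have "(of_nat (card K) * S) / of_nat (card K) \<in> \<rat>" by (intro Rats_divide) auto
  thus ?thesis using \<open>card K > 0\<close> unfolding S_def by simp
qed

end

context irrep
begin

definition rep_of :: "'a set \<Rightarrow> 'a" where "rep_of c = (SOME g. g \<in> c)"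

lemma main_int:
  assumes B: "irrep G n' \<rho>'"
  shows "\<exists>m::int. (\<Sum>g\<in>carrier G. of_nat (cls g) * chi g * cnj (irrep.chi \<rho>' g)) = of_int m
          \<and> int (card (centre G)) dvd m"
proof -
  interpret B: irrep G n' \<rho>' by (rule B)
  define S where "S = (\<Sum>g\<in>carrier G. of_nat (cls g) * chi g * cnj (B.chi g))"
  define Z where "Z = centre G"
  have Zsub: "subgroup Z G" unfolding Z_def by (rule centre_subgroup)
  have ZG: "Z \<subseteq> carrier G" using Zsub subgroup.subset by blast
  have finZ: "finite Z" using ZG fin finite_subset by blast
  have cardZ: "card Z > 0" using finZ Zsub subgroup.one_closed by (auto simp: card_gt_0_iff)
  show ?thesis
  proof (cases "\<exists>z\<in>Z. lam z * cnj (B.lam z) \<noteq> 1")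
    case True
    then obtain z where z: "z \<in> Z" and ne: "lam z * cnj (B.lam z) \<noteq> 1" by blast
    have zc: "z \<in> carrier G" using z ZG by auto
    have zZ: "z \<in> centre G" using z unfolding Z_def .
    have "S = (\<Sum>g\<in>carrier G. of_nat (cls (z \<otimes> g)) * chi (z \<otimes> g) * cnj (B.chi (z \<otimes> g)))"
      unfolding S_def using sum_lmult_reindex[OF zc, of "\<lambda>g. of_nat (cls g) * chi g * cnj (B.chi g)"] by simp
    also have "\<dots> = (\<Sum>g\<in>carrier G. (lam z * cnj (B.lam z)) * (of_nat (cls g) * chi g * cnj (B.chi g)))"
      using cls_centre_mult[OF zZ] chi_centre[OF zZ] B.chi_centre[OF zZ]
      by (intro sum.cong refl) (simp add: algebra_simps)
    also have "\<dots> = (lam z * cnj (B.lam z)) * S" unfolding S_def by (simp add: sum_distrib_left)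
    finally have "S = 0" using ne
      by (metis mult_cancel_right1 mult.commute)
    thus ?thesis unfolding S_def by (intro exI[of _ 0]) simp
  next
    case False
    hence mu: "\<And>z. z \<in> Z \<Longrightarrow> lam z * cnj (B.lam z) = 1" by blast
    define f where "f g = of_nat (cls g) * cnj (B.chi g)" for g
    have cf: "f (h \<otimes> g \<otimes> inv h) = f g" if "g \<in> carrier G" "h \<in> carrier G" for g h
      unfolding f_def using cls_conj[OF that] B.chi_conj[OF that] by simp
    define V where "V y g = f g * chi (g \<otimes> y)" for y g
    have Vz: "V y (z \<otimes> a) = V y a" if z: "z \<in> Z" and a: "a \<in> carrier G" and y: "y \<in> carrier G" for z a y
    proof -
      have zZ: "z \<in> centre G" using z unfolding Z_def .
      have zc: "z \<in> carrier G" using z ZG by auto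
      have e1: "cls (z \<otimes> a) = cls a" using cls_centre_mult[OF zZ a] .
      have e2: "B.chi (z \<otimes> a) = B.lam z * B.chi a" using B.chi_centre[OF zZ a] .
      have e3: "z \<otimes> a \<otimes> y = z \<otimes> (a \<otimes> y)" using zc a y by (simp add: m_assoc)
      have e4: "chi (z \<otimes> (a \<otimes> y)) = lam z * chi (a \<otimes> y)" using chi_centre[OF zZ, of "a \<otimes> y"] a y by simp
      have "V y (z \<otimes> a) = of_nat (cls a) * cnj (B.lam z * B.chi a) * (lam z * chi (a \<otimes> y))"
        unfolding V_def f_def e1 e2 e3 e4 ..
      also have "\<dots> = (lam z * cnj (B.lam z)) * (of_nat (cls a) * cnj (B.chi a) * chi (a \<otimes> y))"
        by (simp add: algebra_simps)
      also have "\<dots> = V y a" using mu[OF z] unfolding V_def f_def by simp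
      finally show ?thesis .
    qed
    have coset_sum: "(\<Sum>g\<in>carrier G. V y g) = of_nat (card Z) * (\<Sum>c\<in>rcosets Z. V y (rep_of c))"
      if y: "y \<in> carrier G" for y
    proof -
      have fe: "\<forall>c\<in>rcosets Z. finite c"
      proof
        fix c assume "c \<in> rcosets Z"
        hence "c \<subseteq> carrier G" using rcosets_subset_PowG[OF Zsub] by auto
        thus "finite c" using fin by (rule finite_subset)
      qed
      have pw: "\<forall>A\<in>rcosets Z. \<forall>B\<in>rcosets Z. A \<noteq> B \<longrightarrow> A \<inter> B = {}"
        using rcos_disjoint[OF Zsub] unfolding pairwise_def disjnt_def by blast
      have "(\<Sum>g\<in>carrier G. V y g) = (\<Sum>c\<in>rcosets Z. \<Sum>g\<in>c. V y g)"
        unfolding rcosets_part_G[OF Zsub, symmetric] sum.Union_disjoint[OF fe pw] by simp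
      also have "\<dots> = (\<Sum>c\<in>rcosets Z. of_nat (card Z) * V y (rep_of c))"
      proof (rule sum.cong[OF refl])
        fix c assume c: "c \<in> rcosets Z"
        then obtain a where a: "a \<in> carrier G" and cdef: "c = Z #> a" unfolding RCOSETS_def by auto
        have all: "V y g = V y a" if g: "g \<in> c" for g
        proof -
          from g obtain z where z: "z \<in> Z" and gz: "g = z \<otimes> a" unfolding cdef r_coset_def by auto
          show ?thesis using Vz[OF z a y] gz by simp
        qed
        have "c \<noteq> {}" using rcos_self[OF a Zsub] cdef by auto
        hence "rep_of c \<in> c" unfolding rep_of_def by (simp add: some_in_eq)
        hence "V y (rep_of c) = V y a" using all by blast
        moreover have "card c = card Z" using card_rcosets_equal[OF c ZG] by simp
        moreover have "(\<Sum>g\<in>c. V y g) = (\<Sum>g\<in>c. V y a)" by (rule sum.cong[OF refl all])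
        ultimately show "(\<Sum>g\<in>c. V y g) = of_nat (card Z) * V y (rep_of c)"
          by simp
      qed
      also have "\<dots> = of_nat (card Z) * (\<Sum>c\<in>rcosets Z. V y (rep_of c))" by (simp add: sum_distrib_left)
      finally show ?thesis .
    qed
    define q where "q = S / of_nat (card Z)"
    have Sq: "S = of_nat (card Z) * q" unfolding q_def using cardZ by simp
    have repC: "rep_of c \<in> carrier G" if c: "c \<in> rcosets Z" for c
    proof -
      obtain a where a: "a \<in> carrier G" and cdef: "c = Z #> a" using c unfolding RCOSETS_def by auto
      have "c \<noteq> {}" using rcos_self[OF a Zsub] cdef by auto
      hence "rep_of c \<in> c" unfolding rep_of_def by (simp add: some_in_eq)
      thus ?thesis using r_coset_subset_G[OF ZG a] cdef by auto
    qed
    have qchi: "q * chi y = (\<Sum>c\<in>rcosets Z. of_nat n * V y (rep_of c))" if y: "y \<in> carrier G" for y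
    proof -
      have "of_nat n * (\<Sum>g\<in>carrier G. f g * chi (g \<otimes> y)) = (\<Sum>g\<in>carrier G. f g * chi g) * chi y"
        by (rule class_fun_schur[OF cf y])
      moreover have "(\<Sum>g\<in>carrier G. f g * chi g) = S" unfolding S_def f_def by (simp add: algebra_simps)
      ultimately have "S * chi y = of_nat n * (of_nat (card Z) * (\<Sum>c\<in>rcosets Z. V y (rep_of c)))"
        using coset_sum[OF y] unfolding V_def by simp
      hence "of_nat (card Z) * (q * chi y) = of_nat (card Z) * (\<Sum>c\<in>rcosets Z. of_nat n * V y (rep_of c))"
        unfolding Sq by (simp add: algebra_simps sum_distrib_left)
      thus ?thesis using cardZ by simp
    qed
    define U where "U = {u :: complex. u ^ N = 1}"
    have finU: "finite U" unfolding U_def using N_pos by (intro finite_roots_unity) auto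
    define I where "I = U \<times> carrier G"
    define J where "J = (rcosets Z) \<times> {..<n'}"
    define t where "t = (\<lambda>(u,y). u * chi y)"
    define cc where "cc = (\<lambda>(c::'a set, i::nat). int (n * cls (rep_of c)))"
    define sg where "sg = (\<lambda>(w,y) (c, i). (cnj (B.eig (rep_of c) ! i) * w, rep_of c \<otimes> y))"
    have finR: "finite (rcosets Z)"
      by (rule finite_subset[OF rcosets_subset_PowG[OF Zsub]]) (simp add: fin)
    have finJ: "finite J" unfolding J_def using finR by simp
    have "algebraic_int q"
    proof (rule alg_int_from_action[where I = I and ii = "(1, \<one>)" and t = t and J = J and c = cc and \<sigma> = sg])
      show "finite I" unfolding I_def using finU fin by simp
      show "(1, \<one>) \<in> I" unfolding I_def U_def by simp
      show "t (1, \<one>) \<noteq> 0" unfolding t_def using chi_one n_pos by simp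
      show "finite J" by (rule finJ)
    next
      fix i j assume i: "i \<in> I" and j: "j \<in> J"
      obtain w y where wy: "i = (w,y)" "w ^ N = 1" "y \<in> carrier G" using i unfolding I_def U_def by auto
      obtain c k where ck: "j = (c,k)" "c \<in> rcosets Z" "k < n'" using j unfolding J_def by auto
      have rc: "rep_of c \<in> carrier G" using repC[OF ck(2)] .
      have "B.eig (rep_of c) ! k ^ N = 1" using B.eig(2)[OF rc] B.eig(1)[OF rc] ck(3) by simp
      hence "(cnj (B.eig (rep_of c) ! k) * w) ^ N = 1" using wy(2)
        by (metis complex_cnj_one complex_cnj_power mult_1 power_mult_distrib)
      thus "sg i j \<in> I" unfolding sg_def I_def U_def wy ck using rc wy(3) by simp
    next
      fix i assume i: "i \<in> I"
      obtain w y where wy: "i = (w,y)" "y \<in> carrier G" using i unfolding I_def by auto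
      have "q * t i = w * (q * chi y)" unfolding t_def wy by simp
      also have "\<dots> = (\<Sum>c\<in>rcosets Z. w * (of_nat n * V y (rep_of c)))"
        unfolding qchi[OF wy(2)] by (simp add: sum_distrib_left)
      also have "\<dots> = (\<Sum>c\<in>rcosets Z. \<Sum>k<n'. of_int (cc (c,k)) * t (sg i (c,k)))"
      proof (rule sum.cong[OF refl])
        fix c assume c: "c \<in> rcosets Z"
        have rc: "rep_of c \<in> carrier G" using repC[OF c] .
        have "B.chi (rep_of c) = (\<Sum>k<n'. B.eig (rep_of c) ! k)"
          using B.chi_eig[OF rc] B.eig(1)[OF rc] by (simp add: sum_list_sum_nth atLeast0LessThan)
        hence "cnj (B.chi (rep_of c)) = (\<Sum>k<n'. cnj (B.eig (rep_of c) ! k))" by (simp add: cnj_sum)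
        thus "w * (of_nat n * V y (rep_of c)) = (\<Sum>k<n'. of_int (cc (c,k)) * t (sg i (c,k)))"
          unfolding V_def f_def cc_def t_def sg_def wy
          by (simp add: sum_distrib_left sum_distrib_right algebra_simps)
      qed
      also have "\<dots> = (\<Sum>j\<in>J. of_int (cc j) * t (sg i j))"
        unfolding J_def by (simp add: sum.cartesian_product)
      finally show "q * t i = (\<Sum>j\<in>J. of_int (cc j) * t (sg i j))" .
    qed
    moreover have "q \<in> \<rat>" unfolding q_def S_def using S_rational[OF B] by (intro Rats_divide) auto
    ultimately have "q \<in> \<int>" by (rule rational_algebraic_int_is_int)
    then obtain m0 where m0: "q = of_int m0" by (auto elim: Ints_cases)
    show ?thesis
      by (intro exI[of _ "int (card Z) * m0"]) (simp add: S_def[symmetric] Sq m0 Z_def)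
  qed
qed

end

context irrep
begin

lemma chi_class: assumes a: "a \<in> carrier G" and b: "b \<in> conj_class G a"
  shows "chi b = chi a"
proof -
  from b obtain h where h: "h \<in> carrier G" and bd: "b = h \<otimes> a \<otimes> inv h" unfolding conj_class_def by auto
  show ?thesis unfolding bd by (rule chi_conj[OF a h])
qed

lemma class_val_eq:
  assumes C: "C \<in> Conj G" and g: "g \<in> C"
  shows "class_val (\<lambda>g. if g \<in> carrier G then mtrace (\<rho> g) else 0) C = chi g"
proof -
  from C obtain a where a: "a \<in> carrier G" and Cd: "C = conj_class G a" unfolding Conj_def by auto
  define x where "x = (SOME x. x \<in> C)"
  have x: "x \<in> C" unfolding x_def using g by (rule someI)
  have xc: "x \<in> carrier G" using x conj_class_sub[OF a] Cd by auto
  have "class_val (\<lambda>g. if g \<in> carrier G then mtrace (\<rho> g) else 0) C = chi x"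
    unfolding class_val_def x_def[symmetric] using xc chi_def by simp
  also have "\<dots> = chi a" using chi_class[OF a] x Cd by simp
  also have "\<dots> = chi g" using chi_class[OF a] g Cd by simp
  finally show ?thesis .
qed

lemma cls_class: assumes C: "C \<in> Conj G" and g: "g \<in> C" shows "cls g = card C"
proof -
  from C obtain a where a: "a \<in> carrier G" and Cd: "C = conj_class G a" unfolding Conj_def by auto
  show ?thesis unfolding cls_def using conj_class_eq[OF a] g Cd by simp
qed

lemma sum_convert:
  assumes B: "irrep G n' \<rho>'"
  shows "(\<Sum>C\<in>Conj G. of_nat (card C ^ 2) * class_val (\<lambda>g. if g \<in> carrier G then mtrace (\<rho> g) else 0) C
            * cnj (class_val (\<lambda>g. if g \<in> carrier G then mtrace (\<rho>' g) else 0) C))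
       = (\<Sum>g\<in>carrier G. of_nat (cls g) * chi g * cnj (irrep.chi \<rho>' g))"
proof -
  interpret B: irrep G n' \<rho>' by (rule B)
  have "(\<Sum>g\<in>carrier G. of_nat (cls g) * chi g * cnj (B.chi g))
      = (\<Sum>C\<in>Conj G. \<Sum>g\<in>C. of_nat (cls g) * chi g * cnj (B.chi g))"
    by (rule sum_over_classes)
  also have "\<dots> = (\<Sum>C\<in>Conj G. of_nat (card C ^ 2) * class_val (\<lambda>g. if g \<in> carrier G then mtrace (\<rho> g) else 0) C
            * cnj (class_val (\<lambda>g. if g \<in> carrier G then mtrace (\<rho>' g) else 0) C))"
  proof (rule sum.cong[OF refl])
    fix C assume C: "C \<in> Conj G"
    have "(\<Sum>g\<in>C. of_nat (cls g) * chi g * cnj (B.chi g)) =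
          (\<Sum>g\<in>C. of_nat (card C) * class_val (\<lambda>g. if g \<in> carrier G then mtrace (\<rho> g) else 0) C
            * cnj (class_val (\<lambda>g. if g \<in> carrier G then mtrace (\<rho>' g) else 0) C))"
      using cls_class[OF C] class_val_eq[OF C] B.class_val_eq[OF C] by (intro sum.cong refl) simp
    also have "\<dots> = of_nat (card C ^ 2) * class_val (\<lambda>g. if g \<in> carrier G then mtrace (\<rho> g) else 0) C
            * cnj (class_val (\<lambda>g. if g \<in> carrier G then mtrace (\<rho>' g) else 0) C)"
      by (simp add: power2_eq_square)
    finally show "(\<Sum>g\<in>C. of_nat (cls g) * chi g * cnj (B.chi g)) = \<dots>" .
  qed
  finally show ?thesis by simp
qed

end

theorem proposition3p2:
  fixes G :: "('g, 'b) monoid_scheme" and \<chi> \<chi>' :: "'g \<Rightarrow> complex"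
  assumes "group G" and "finite (carrier G)"
    and "\<chi> \<in> Irr G" and "\<chi>' \<in> Irr G"
  shows "\<exists>m::int. (\<Sum>C\<in>Conj G. of_nat (card C ^ 2) * class_val \<chi> C * cnj (class_val \<chi>' C))
                    = of_int m \<and> int (card (centre G)) dvd m"
proof -
  obtain n \<rho> where irr: "irreducible_rep G n \<rho>"
    and chd: "\<chi> = (\<lambda>g. if g \<in> carrier G then mtrace (\<rho> g) else 0)"
    using assms(3) unfolding Irr_def by auto
  obtain n' \<rho>' where irr': "irreducible_rep G n' \<rho>'"
    and chd': "\<chi>' = (\<lambda>g. if g \<in> carrier G then mtrace (\<rho>' g) else 0)"
    using assms(4) unfolding Irr_def by auto
  have fg: "fgroup G" by (rule fgroup.intro[OF assms(1)]) (rule fgroup_axioms.intro[OF assms(2)])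
  have A: "irrep G n \<rho>" by (rule irrep.intro[OF fg]) (rule irrep_axioms.intro[OF irr])
  have B: "irrep G n' \<rho>'" by (rule irrep.intro[OF fg]) (rule irrep_axioms.intro[OF irr'])
  show ?thesis
    unfolding chd chd' irrep.sum_convert[OF A B] using irrep.main_int[OF A B] .
qed

end
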